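(* Let $N\ge1$, $K>0$, $r_1,\dots,r_N>0$, and let $(\mu_{ij})_{1\le i,j\le N}$ be a nonnegative, symmetric, irreducible real matrix. Consider the system $$\frac{dv_i}{dt}=v_i\left[r_i-\frac{1}{K}\sum_{j=1}^N r_jv_j\right]+\sum_{j=1}^N\mu_{ij}(v_j-v_i),\qquad i=1,\dots,N,$$ which has a unique positive stationary solution $\bar v$. Then for any initial datum $v(0)\in[0,\infty)^N$ not identically zero, the solution $v(t)$ converges exponentially fast to $\bar v$: there exist two positive constants $C_1$ and $C_2$ such that $\|v(t)-\bar v\|_\infty\le C_1e^{-C_2t}$ for all $t\ge0$.
   Context: A stationary solution is a vector $\bar v$ at which the right-hand side of the system vanishes for every $i$; positive means all components are strictly positive. *)

theory Defs
  imports "HOL-Analysis.Analysis"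
begin

text \<open>Vectors in R^N are modelled as real^'n with N = CARD('n) (automatically at least 1).\<close>

definition nonneg_matrix :: "real^'n^'n \<Rightarrow> bool" where
  "nonneg_matrix mu \<longleftrightarrow> (\<forall>i j. mu $ i $ j \<ge> 0)"

definition symmetric_matrix :: "real^'n^'n \<Rightarrow> bool" where
  "symmetric_matrix mu \<longleftrightarrow> (\<forall>i j. mu $ i $ j = mu $ j $ i)"

text \<open>Irreducible: the directed graph with an edge i -> j whenever mu_ij is nonzero is
  strongly connected (every index reaches every other index).\<close>
definition irreducible_matrix :: "real^'n^'n \<Rightarrow> bool" where
  "irreducible_matrix mu \<longleftrightarrow> (\<forall>i j. (i, j) \<in> {(a, b). mu $ a $ b \<noteq> 0}\<^sup>*)"

definition rhs :: "real \<Rightarrow> real^'n \<Rightarrow> real^'n^'n \<Rightarrow> real^'n \<Rightarrow> real^'n" where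
  "rhs K r mu v = (\<chi> i. v $ i * (r $ i - (1 / K) * (\<Sum>j\<in>UNIV. r $ j * v $ j))
                       + (\<Sum>j\<in>UNIV. mu $ i $ j * (v $ j - v $ i)))"

definition stationary :: "real \<Rightarrow> real^'n \<Rightarrow> real^'n^'n \<Rightarrow> real^'n \<Rightarrow> bool" where
  "stationary K r mu v \<longleftrightarrow> rhs K r mu v = 0"

definition positive_vec :: "real^'n \<Rightarrow> bool" where
  "positive_vec v \<longleftrightarrow> (\<forall>i. v $ i > 0)"

definition nonneg_vec :: "real^'n \<Rightarrow> bool" where
  "nonneg_vec v \<longleftrightarrow> (\<forall>i. v $ i \<ge> 0)"

definition linf_norm :: "real^'n \<Rightarrow> real" where
  "linf_norm v = Max (range (\<lambda>i. \<bar>v $ i\<bar>))"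

end

theory Submission
  imports Defs
begin


definition Aop :: "real^'n \<Rightarrow> real^'n^'n \<Rightarrow> real^'n \<Rightarrow> real^'n" where
  "Aop r mu x = (\<chi> i. r$i * x$i + (\<Sum>j\<in>UNIV. mu$i$j * (x$j - x$i)))"

definition vabs :: "real^'n \<Rightarrow> real^'n" where "vabs x = (\<chi> i. \<bar>x$i\<bar>)"

lemma rhs_eq: "rhs K r mu v = Aop r mu v - ((r \<bullet> v) / K) *\<^sub>R v"
  unfolding rhs_def Aop_def inner_vec_def
  by (simp add: vec_eq_iff algebra_simps sum_divide_distrib)

lemma Aop_add: "Aop r mu (x + y) = Aop r mu x + Aop r mu y"
  unfolding Aop_def by (simp add: vec_eq_iff sum.distrib[symmetric] algebra_simps)

lemma Aop_scale: "Aop r mu (c *\<^sub>R x) = c *\<^sub>R Aop r mu x"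
  unfolding Aop_def by (simp add: vec_eq_iff algebra_simps sum_distrib_left)

lemma Aop_diff: "Aop r mu (x - y) = Aop r mu x - Aop r mu y"
  using Aop_add[of r mu "x - y" y] by simp

lemma Aop_one: "Aop r mu (\<chi> i. 1) = r"
  unfolding Aop_def by (simp add: vec_eq_iff)

lemma Aop_sym:
  assumes "symmetric_matrix mu"
  shows "x \<bullet> Aop r mu y = Aop r mu x \<bullet> y"
proof -
  have s: "\<And>i j. mu$i$j = mu$j$i" using assms unfolding symmetric_matrix_def by auto
  have "(\<Sum>i\<in>UNIV. \<Sum>j\<in>UNIV. x$i * (mu$i$j * y$j)) = (\<Sum>j\<in>UNIV. \<Sum>i\<in>UNIV. x$i * (mu$i$j * y$j))"
    by (rule sum.swap)
  also have "\<dots> = (\<Sum>i\<in>UNIV. \<Sum>j\<in>UNIV. (mu$i$j * x$j) * y$i)"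
    by (simp add: s mult.commute mult.left_commute)
  finally have e: "(\<Sum>i\<in>UNIV. \<Sum>j\<in>UNIV. x$i * (mu$i$j * y$j)) = (\<Sum>i\<in>UNIV. \<Sum>j\<in>UNIV. (mu$i$j * x$j) * y$i)" .
  have L: "x \<bullet> Aop r mu y = (\<Sum>i\<in>UNIV. x$i * r$i * y$i) + (\<Sum>i\<in>UNIV. \<Sum>j\<in>UNIV. x$i * (mu$i$j * y$j))
        - (\<Sum>i\<in>UNIV. \<Sum>j\<in>UNIV. x$i * mu$i$j * y$i)"
    unfolding Aop_def inner_vec_def
    by (simp add: algebra_simps sum_distrib_left sum.distrib sum_subtractf)
  have R: "Aop r mu x \<bullet> y = (\<Sum>i\<in>UNIV. x$i * r$i * y$i) + (\<Sum>i\<in>UNIV. \<Sum>j\<in>UNIV. (mu$i$j * x$j) * y$i)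
        - (\<Sum>i\<in>UNIV. \<Sum>j\<in>UNIV. x$i * mu$i$j * y$i)"
    unfolding Aop_def inner_vec_def
    by (simp add: algebra_simps sum_distrib_left sum_distrib_right sum.distrib sum_subtractf)
  show ?thesis using L R e by simp
qed

lemma Aop_abs:
  assumes "nonneg_matrix mu"
  shows "x \<bullet> Aop r mu x \<le> vabs x \<bullet> Aop r mu (vabs x)"
proof -
  have m: "\<And>i j. mu$i$j \<ge> 0" using assms unfolding nonneg_matrix_def by auto
  have "x$i * (r$i * x$i + (\<Sum>j\<in>UNIV. mu$i$j * (x$j - x$i)))
     \<le> \<bar>x$i\<bar> * (r$i * \<bar>x$i\<bar> + (\<Sum>j\<in>UNIV. mu$i$j * (\<bar>x$j\<bar> - \<bar>x$i\<bar>)))" for i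
  proof -
    have "x$i * (\<Sum>j\<in>UNIV. mu$i$j * (x$j - x$i)) = (\<Sum>j\<in>UNIV. mu$i$j * (x$i * x$j) - mu$i$j * (x$i * x$i))"
      by (simp add: sum_distrib_left algebra_simps)
    also have "\<dots> \<le> (\<Sum>j\<in>UNIV. mu$i$j * (\<bar>x$i\<bar> * \<bar>x$j\<bar>) - mu$i$j * (\<bar>x$i\<bar> * \<bar>x$i\<bar>))"
    proof (rule sum_mono)
      fix j
      have "x$i * x$j \<le> \<bar>x$i\<bar> * \<bar>x$j\<bar>" by (metis abs_ge_self abs_mult)
      hence "mu$i$j * (x$i * x$j) \<le> mu$i$j * (\<bar>x$i\<bar> * \<bar>x$j\<bar>)" using m by (simp add: mult_left_mono)
      moreover have "x$i * x$i = \<bar>x$i\<bar> * \<bar>x$i\<bar>" by (simp add: abs_mult_self_eq)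
      ultimately show "mu$i$j * (x$i * x$j) - mu$i$j * (x$i * x$i) \<le> mu$i$j * (\<bar>x$i\<bar> * \<bar>x$j\<bar>) - mu$i$j * (\<bar>x$i\<bar> * \<bar>x$i\<bar>)"
        by linarith
    qed
    also have "\<dots> = \<bar>x$i\<bar> * (\<Sum>j\<in>UNIV. mu$i$j * (\<bar>x$j\<bar> - \<bar>x$i\<bar>))"
      by (simp only: sum_distrib_left right_diff_distrib mult.assoc mult.commute mult.left_commute)
    finally have "x$i * (\<Sum>j\<in>UNIV. mu$i$j * (x$j - x$i)) \<le> \<bar>x$i\<bar> * (\<Sum>j\<in>UNIV. mu$i$j * (\<bar>x$j\<bar> - \<bar>x$i\<bar>))" .
    moreover have "x$i * (r$i * x$i) = \<bar>x$i\<bar> * (r$i * \<bar>x$i\<bar>)"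
      by (metis abs_mult_self_eq mult.left_commute)
    ultimately show ?thesis by (simp add: distrib_left)
  qed
  thus ?thesis unfolding Aop_def vabs_def inner_vec_def by (simp add: sum_mono)
qed

lemma Aop_pos:
  assumes "nonneg_matrix mu" "irreducible_matrix mu"
    and "Aop r mu y = m *\<^sub>R y" "\<forall>i. y$i \<ge> 0" "y \<noteq> 0"
  shows "\<forall>i. y$i > 0"
proof -
  have mm: "\<And>i j. mu$i$j \<ge> 0" using assms(1) unfolding nonneg_matrix_def by auto
  have step: "y$j = 0" if "y$i = 0" "mu$i$j \<noteq> 0" for i j
  proof -
    have "(Aop r mu y)$i = m * y$i" using assms(3) by simp
    hence "(\<Sum>j\<in>UNIV. mu$i$j * y$j) = 0" using that(1) unfolding Aop_def by simp
    hence "\<forall>j\<in>UNIV. mu$i$j * y$j = 0"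
      by (subst sum_nonneg_eq_0_iff[symmetric]) (auto simp: mm assms(4))
    thus ?thesis using that(2) by auto
  qed
  have reach: "y$j = 0" if "(i,j) \<in> {(a, b). mu $ a $ b \<noteq> 0}\<^sup>*" "y$i = 0" for i j
    using that by (induction rule: rtrancl_induct) (auto intro: step)
  show ?thesis
  proof (rule ccontr)
    assume "\<not> (\<forall>i. y$i > 0)"
    then obtain i where "y$i = 0" using assms(4) by (metis less_eq_real_def)
    hence "\<forall>j. y$j = 0" using reach assms(2) unfolding irreducible_matrix_def by blast
    thus False using assms(5) by (simp add: vec_eq_iff)
  qed
qed

lemma cont_Q: "continuous_on S (\<lambda>x. x \<bullet> Aop r mu x)"
  unfolding Aop_def by (intro continuous_intros)



lemma Q_scale: "(c *\<^sub>R y) \<bullet> Aop r mu (c *\<^sub>R y) = c^2 * (y \<bullet> Aop r mu y)"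
  by (simp add: Aop_scale power2_eq_square)

lemma Q_bound_from_sphere:
  assumes "\<forall>z. norm z = 1 \<and> P z \<longrightarrow> z \<bullet> Aop r mu z \<le> l"
    and "\<And>c z. P z \<Longrightarrow> P (c *\<^sub>R z)"
    and "P y"
  shows "y \<bullet> Aop r mu y \<le> l * (y \<bullet> y)"
proof (cases "y = 0")
  case True thus ?thesis by (simp add: Aop_def inner_vec_def)
next
  case False
  let ?z = "(1 / norm y) *\<^sub>R y"
  have nz: "norm ?z = 1" using False by simp
  have "?z \<bullet> Aop r mu ?z \<le> l" using assms nz by blast
  hence "(1/norm y)^2 * (y \<bullet> Aop r mu y) \<le> l" by (simp only: Q_scale)
  hence "(y \<bullet> Aop r mu y) \<le> l * (norm y)^2" using False
    by (simp add: field_simps power2_eq_square)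
  thus ?thesis by (simp add: power2_norm_eq_inner)
qed

lemma eig_of_max:
  assumes sym: "symmetric_matrix mu"
    and bd: "\<forall>y. y \<bullet> Aop r mu y \<le> l * (y \<bullet> y)"
    and eq: "x \<bullet> Aop r mu x = l * (x \<bullet> x)"
  shows "Aop r mu x = l *\<^sub>R x"
proof -
  define z where "z = Aop r mu x - l *\<^sub>R x"
  define k where "k = z \<bullet> z"
  define m where "m = z \<bullet> Aop r mu z - l * (z \<bullet> z)"
  have m0: "m \<le> 0" using bd unfolding m_def by auto
  have xz: "x \<bullet> Aop r mu z = z \<bullet> Aop r mu x"
    using Aop_sym[OF sym, of x r z] by (simp add: inner_commute)
  have kk: "z \<bullet> Aop r mu x - l * (z \<bullet> x) = k" unfolding k_def z_def
    by (simp add: inner_diff_left inner_diff_right inner_commute algebra_simps)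
  have f: "2 * s * k + s^2 * m \<le> 0" for s
  proof -
    have i1: "(x + s *\<^sub>R z) \<bullet> Aop r mu (x + s *\<^sub>R z) \<le> l * ((x + s *\<^sub>R z) \<bullet> (x + s *\<^sub>R z))"
      using bd by blast
    have i2: "(x + s *\<^sub>R z) \<bullet> Aop r mu (x + s *\<^sub>R z) =
        x \<bullet> Aop r mu x + 2 * s * (z \<bullet> Aop r mu x) + s^2 * (z \<bullet> Aop r mu z)"
      by (simp add: Aop_add Aop_scale inner_add_left inner_add_right xz power2_eq_square algebra_simps)
    have i3: "l * ((x + s *\<^sub>R z) \<bullet> (x + s *\<^sub>R z)) = l * (x \<bullet> x) + l * (2 * s * (z \<bullet> x)) + l * (s^2 * (z \<bullet> z))"
      by (simp add: inner_add_left inner_add_right inner_commute[of x z] power2_eq_square algebra_simps)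
    have i4: "2 * s * k + s^2 * m = 2 * s * (z \<bullet> Aop r mu x) + s^2 * (z \<bullet> Aop r mu z)
        - (l * (2 * s * (z \<bullet> x)) + l * (s^2 * (z \<bullet> z)))"
      unfolding kk[symmetric] m_def by (simp add: algebra_simps)
    show ?thesis using i1 i2 i3 i4 eq by linarith
  qed
  have g: "2 * (k / (1 - m)) * k + (k / (1 - m))^2 * m \<le> 0" by (rule f)
  have M1: "1 - m \<ge> 1" using m0 by simp
  have eqD: "(1 - m)^2 * (2 * (k / (1 - m)) * k + (k / (1 - m))^2 * m) = 2 * (1 - m) * k * k + k * k * m"
  proof -
    define D where "D = 1 - m"
    have "D \<noteq> 0" using M1 unfolding D_def by simp
    hence "D^2 * (2 * (k / D) * k + (k / D)^2 * m) = 2 * D * k * k + k * k * m"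
      by (simp add: field_simps power2_eq_square)
    thus ?thesis unfolding D_def .
  qed
  have "(1 - m)^2 * (2 * (k / (1 - m)) * k + (k / (1 - m))^2 * m) \<le> 0"
    using g by (simp add: mult_nonneg_nonpos)
  hence "2 * (1 - m) * k * k + k * k * m \<le> 0" using eqD by simp
  hence "(k * k) * (2 - m) \<le> 0" by (simp add: algebra_simps)
  moreover have "(k * k) * (2 - m) \<ge> 0" using m0 by simp
  ultimately have "(k * k) * (2 - m) = 0" by linarith
  hence "k = 0" using m0 by simp
  thus ?thesis unfolding k_def z_def by simp
qed

lemma vabs_inner: "vabs x \<bullet> vabs x = x \<bullet> x"
  unfolding vabs_def inner_vec_def by (simp add: abs_mult_self_eq)

lemma spectral:
  fixes r :: "real^'n" and mu :: "real^'n^'n"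
  assumes nn: "nonneg_matrix mu" and sym: "symmetric_matrix mu" and irr: "irreducible_matrix mu"
    and rp: "positive_vec r"
  shows "\<exists>\<psi> l l2. (\<forall>i. \<psi>$i > 0) \<and> \<psi> \<bullet> \<psi> = 1 \<and> Aop r mu \<psi> = l *\<^sub>R \<psi> \<and> l > 0 \<and> l2 < l
     \<and> (\<forall>y. y \<bullet> Aop r mu y \<le> l * (y \<bullet> y))
     \<and> (\<forall>x. x \<bullet> \<psi> = 0 \<longrightarrow> x \<bullet> Aop r mu x \<le> l2 * (x \<bullet> x))"
proof -
  let ?Q = "\<lambda>x. x \<bullet> Aop r mu x"
  have "sphere (0::real^'n) 1 \<noteq> {}" by simp
  then obtain x0 where x0: "x0 \<in> sphere 0 1" "\<forall>y\<in>sphere 0 1. ?Q y \<le> ?Q x0"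
    using continuous_attains_sup[OF compact_sphere _ cont_Q] by blast
  define l where "l = ?Q x0"
  have bd: "\<forall>y. ?Q y \<le> l * (y \<bullet> y)"
    using Q_bound_from_sphere[of "\<lambda>_. True" r mu l] x0 unfolding l_def by auto
  have nx0: "x0 \<bullet> x0 = 1" using x0(1) by (simp add: dot_square_norm)
  define \<psi> where "\<psi> = vabs x0"
  have np: "\<psi> \<bullet> \<psi> = 1" unfolding \<psi>_def using vabs_inner[of x0] nx0 by simp
  have "?Q \<psi> \<ge> l" unfolding \<psi>_def l_def by (rule Aop_abs[OF nn])
  moreover have "?Q \<psi> \<le> l * (\<psi> \<bullet> \<psi>)" using bd by blast
  ultimately have qp: "?Q \<psi> = l * (\<psi> \<bullet> \<psi>)" using np by simp
  have eigp: "Aop r mu \<psi> = l *\<^sub>R \<psi>" by (rule eig_of_max[OF sym bd qp])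
  have pnz: "\<psi> \<noteq> 0" using np by auto
  have ppos: "\<forall>i. \<psi>$i > 0"
    by (rule Aop_pos[OF nn irr eigp]) (use pnz in \<open>auto simp: \<psi>_def vabs_def\<close>)
  have rpos: "\<forall>i. r$i > 0" using rp unfolding positive_vec_def by auto
  have "(\<chi> i. 1) \<bullet> Aop r mu \<psi> = r \<bullet> \<psi>"
    using Aop_sym[OF sym, of "\<chi> i. 1" r \<psi>] by (simp add: Aop_one)
  hence e1: "l * ((\<chi> i. 1) \<bullet> \<psi>) = r \<bullet> \<psi>" using eigp by simp
  have "r \<bullet> \<psi> > 0" unfolding inner_vec_def using rpos ppos
    by (intro sum_pos) (auto intro: mult_pos_pos)
  moreover have "(\<chi> i. 1) \<bullet> \<psi> > 0" unfolding inner_vec_def using ppos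
    by (intro sum_pos) auto
  ultimately have lpos: "l > 0" using e1 by (metis zero_less_mult_pos2)
  define S2 where "S2 = sphere (0::real^'n) 1 \<inter> {x. x \<bullet> \<psi> = 0}"
  have gap: "\<exists>l2<l. \<forall>x. x \<bullet> \<psi> = 0 \<longrightarrow> ?Q x \<le> l2 * (x \<bullet> x)"
  proof (cases "S2 = {}")
    case True
    have "x = 0" if "x \<bullet> \<psi> = 0" for x
    proof (rule ccontr)
      assume "x \<noteq> 0"
      hence "(1/norm x) *\<^sub>R x \<in> S2" using that unfolding S2_def by simp
      thus False using True by simp
    qed
    show ?thesis
    proof (intro exI[of _ "l - 1"] conjI allI impI)
      fix x assume "x \<bullet> \<psi> = 0"
      hence "x = 0" by fact
      thus "?Q x \<le> (l - 1) * (x \<bullet> x)" by (simp add: Aop_def inner_vec_def)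
    qed simp
  next
    case False
    have "closed {x::real^'n. x \<bullet> \<psi> = 0}"
      by (intro closed_Collect_eq continuous_intros)
    hence cS2: "compact S2" unfolding S2_def by (intro compact_Int_closed compact_sphere)
    obtain x2 where x2: "x2 \<in> S2" "\<forall>y\<in>S2. ?Q y \<le> ?Q x2"
      using continuous_attains_sup[OF cS2 False cont_Q] by blast
    define l2 where "l2 = ?Q x2"
    have bd2: "\<forall>x. x \<bullet> \<psi> = 0 \<longrightarrow> ?Q x \<le> l2 * (x \<bullet> x)"
      using Q_bound_from_sphere[of "\<lambda>z. z \<bullet> \<psi> = 0" r mu l2] x2 unfolding l2_def S2_def by auto
    have nx2: "x2 \<bullet> x2 = 1" "x2 \<bullet> \<psi> = 0" using x2(1) by (auto simp: S2_def dot_square_norm)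
    have "l2 \<le> l" using bd nx2 unfolding l2_def by (metis mult.right_neutral)
    moreover have "l2 \<noteq> l"
    proof
      assume "l2 = l"
      hence q2: "?Q x2 = l * (x2 \<bullet> x2)" using nx2 unfolding l2_def by simp
      have e2: "Aop r mu x2 = l *\<^sub>R x2" by (rule eig_of_max[OF sym bd q2])
      have "?Q (vabs x2) \<ge> l" using Aop_abs[OF nn, of x2 r] q2 nx2 by simp
      moreover have "?Q (vabs x2) \<le> l * (vabs x2 \<bullet> vabs x2)" using bd by blast
      ultimately have qa: "?Q (vabs x2) = l * (vabs x2 \<bullet> vabs x2)" using vabs_inner[of x2] nx2 by simp
      have ea: "Aop r mu (vabs x2) = l *\<^sub>R vabs x2" by (rule eig_of_max[OF sym bd qa])
      have "vabs x2 \<noteq> 0" using vabs_inner[of x2] nx2 by auto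
      hence apos: "\<forall>i. vabs x2 $ i > 0"
        by (intro Aop_pos[OF nn irr ea]) (auto simp: vabs_def)
      define p where "p = x2 + vabs x2"
      have ep: "Aop r mu p = l *\<^sub>R p" unfolding p_def by (simp add: Aop_add e2 ea scaleR_add_right)
      have pnn: "\<forall>i. p$i \<ge> 0" unfolding p_def vabs_def by auto
      show False
      proof (cases "p = 0")
        case True
        have "\<forall>i. x2$i < 0"
        proof
          fix i
          have "x2$i + \<bar>x2$i\<bar> = 0" using True unfolding p_def vabs_def by (simp add: vec_eq_iff)
          moreover have "\<bar>x2$i\<bar> > 0" using apos unfolding vabs_def by simp
          ultimately show "x2$i < 0" by linarith
        qed
        hence "(\<Sum>i\<in>UNIV. - (x2$i * \<psi>$i)) > 0" using ppos
          by (intro sum_pos) (auto simp: mult_neg_pos)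
        hence "x2 \<bullet> \<psi> < 0" unfolding inner_vec_def by (simp add: sum_negf)
        thus False using nx2 by simp
      next
        case False
        hence "\<forall>i. p$i > 0" by (intro Aop_pos[OF nn irr ep pnn])
        have "\<forall>i. x2$i > 0"
        proof
          fix i
          have "x2$i + \<bar>x2$i\<bar> > 0" using \<open>\<forall>i. p$i > 0\<close> unfolding p_def vabs_def by simp
          thus "x2$i > 0" by linarith
        qed
        hence "x2 \<bullet> \<psi> > 0" unfolding inner_vec_def using ppos
          by (intro sum_pos) auto
        thus False using nx2 by simp
      qed
    qed
    ultimately show ?thesis using bd2 by (intro exI[of _ l2]) auto
  qed
  then obtain l2 where "l2 < l" "\<forall>x. x \<bullet> \<psi> = 0 \<longrightarrow> ?Q x \<le> l2 * (x \<bullet> x)" by blast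
  thus ?thesis using ppos np eigp lpos bd by blast
qed



lemma decay_le:
  fixes F F' :: "real \<Rightarrow> real"
  assumes T: "T \<ge> 0"
    and d: "\<And>t. t \<in> {0..T} \<Longrightarrow> (F has_real_derivative F' t) (at t within {0..T})"
    and i: "\<And>t. t \<in> {0..T} \<Longrightarrow> F' t \<le> - \<beta> * F t"
  shows "F T \<le> F 0 * exp (- \<beta> * T)"
proof -
  define G where "G t = F t * exp (\<beta> * t)" for t
  define G' where "G' t = F' t * exp (\<beta> * t) + F t * (\<beta> * exp (\<beta> * t))" for t
  have dG: "(G has_derivative (*) (G' x)) (at x within {0..T})" if "0 \<le> x" "x \<le> T" for x
  proof -
    have "(G has_real_derivative G' x) (at x within {0..T})"
      unfolding G_def G'_def using d[of x] that
      by (auto intro!: derivative_eq_intros)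
    thus ?thesis by (simp add: has_field_derivative_def)
  qed
  obtain x where x: "x \<in> {0..T}" "G T - G 0 = G' x * (T - 0)"
    using mvt_very_simple[OF T dG] by blast
  have "G' x = (F' x + \<beta> * F x) * exp (\<beta> * x)" unfolding G'_def by (simp add: algebra_simps)
  also have "\<dots> \<le> 0" using i[OF x(1)] by (intro mult_nonpos_nonneg) auto
  finally have "G' x * T \<le> 0" using T by (simp add: mult_nonpos_nonneg)
  hence "G T \<le> G 0" using x by simp
  hence "F T * exp (\<beta> * T) \<le> F 0" unfolding G_def by simp
  hence "F T * exp (\<beta> * T) * exp (- \<beta> * T) \<le> F 0 * exp (- \<beta> * T)" by simp
  thus ?thesis by (simp add: mult.assoc exp_add[symmetric])
qed

lemma decay_ge:
  fixes F F' :: "real \<Rightarrow> real"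
  assumes T: "T \<ge> 0"
    and d: "\<And>t. t \<in> {0..T} \<Longrightarrow> (F has_real_derivative F' t) (at t within {0..T})"
    and i: "\<And>t. t \<in> {0..T} \<Longrightarrow> F' t \<ge> - \<beta> * F t"
  shows "F T \<ge> F 0 * exp (- \<beta> * T)"
proof -
  have d': "((\<lambda>t. - F t) has_real_derivative - F' t) (at t within {0..T})" if "t \<in> {0..T}" for t
    using d[OF that] by (rule DERIV_minus)
  have i': "- F' t \<le> - \<beta> * (- F t)" if "t \<in> {0..T}" for t using i[OF that] by simp
  have "(- F T) \<le> (- F 0) * exp (- \<beta> * T)"
    by (rule decay_le[of T "\<lambda>t. - F t" "\<lambda>t. - F' t" \<beta>, OF T d' i'])
  thus ?thesis by simp
qed

lemma cont_bounded:
  fixes f :: "real \<Rightarrow> 'a::real_normed_vector"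
  assumes "continuous_on {a..b} f"
  shows "\<exists>B. \<forall>t\<in>{a..b}. norm (f t) \<le> B"
proof -
  have "bounded (f ` {a..b})" by (intro compact_imp_bounded compact_continuous_image assms compact_Icc)
  thus ?thesis unfolding bounded_iff by auto
qed



lemma linf_le_norm: "linf_norm (x::real^'n) \<le> norm x"
  unfolding linf_norm_def by (subst Max_le_iff) (auto simp: component_le_norm_cart)

lemma sqrt_exp_bound:
  fixes y F k t :: real
  assumes "y^2 \<le> F * exp (- k * t)" "F \<ge> 0"
  shows "\<bar>y\<bar> \<le> sqrt F * exp (- (k / 2) * t)"
proof -
  have ee: "exp (- (k / 2) * t) * exp (- (k / 2) * t) = exp (- k * t)"
    by (simp add: exp_add[symmetric])
  have "\<bar>y\<bar> = sqrt (y^2)" by simp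
  also have "\<dots> \<le> sqrt (F * exp (- k * t))" using assms(1) by (rule real_sqrt_le_mono)
  also have "\<dots> = sqrt F * sqrt (exp (- (k / 2) * t) * exp (- (k / 2) * t))" by (subst ee) (rule real_sqrt_mult)
  also have "\<dots> = sqrt F * exp (- (k / 2) * t)" by simp
  finally show ?thesis .
qed

lemma amgm_aux:
  fixes l K x y :: real
  assumes "l > 0" "K > 0"
  shows "2 * x * y / K \<le> l * x^2 + y^2 / (l * K^2)"
proof -
  have e: "l * K^2 * (l * x^2 + y^2 / (l * K^2) - 2 * x * y / K) = (l * x * K - y)^2"
    using assms by (simp add: field_simps power2_eq_square)
  have "l * K^2 > 0" using assms by simp
  moreover have "l * K^2 * (l * x^2 + y^2 / (l * K^2) - 2 * x * y / K) \<ge> 0" unfolding e by simp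
  ultimately have "l * x^2 + y^2 / (l * K^2) - 2 * x * y / K \<ge> 0"
    by (simp add: zero_le_mult_iff)
  thus ?thesis by simp
qed

lemma ode_conv:
  fixes r \<psi> :: "real^'n" and mu :: "real^'n^'n" and v :: "real \<Rightarrow> real^'n"
  assumes K: "K > 0" and rpos: "\<forall>i. r$i > 0" and sym: "symmetric_matrix mu"
    and pp: "\<forall>i. \<psi>$i > 0" and pn: "\<psi> \<bullet> \<psi> = 1"
    and eig: "Aop r mu \<psi> = l *\<^sub>R \<psi>" and lpos: "l > 0" and l2: "l2 < l"
    and gap: "\<forall>x. x \<bullet> \<psi> = 0 \<longrightarrow> x \<bullet> Aop r mu x \<le> l2 * (x \<bullet> x)"
    and vd0: "\<forall>t\<ge>0. (v has_vector_derivative rhs K r mu (v t)) (at t within {0..})"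
    and v0: "nonneg_vec (v 0)" "v 0 \<noteq> 0"
  shows "\<exists>C1 C2. C1 > 0 \<and> C2 > 0 \<and>
     (\<forall>t\<ge>0. linf_norm (v t - (l * K / (r \<bullet> \<psi>)) *\<^sub>R \<psi>) \<le> C1 * exp (- C2 * t))"
proof -
  define S where "S t = (r \<bullet> v t) / K" for t
  define a where "a t = \<psi> \<bullet> v t" for t
  define V where "V t = Aop r mu (v t) - S t *\<^sub>R v t" for t
  have vd: "(v has_vector_derivative V t) (at t within {0..})" if "t \<ge> 0" for t
    using vd0 that unfolding V_def S_def by (simp add: rhs_eq)
  have vc: "continuous_on {0..} v"
    by (rule continuous_on_vector_derivative) (use vd in auto)
  have Sc: "continuous_on {0..} S" unfolding S_def
    by (intro continuous_intros vc) (use K in auto)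
  have ac: "continuous_on {0..} a" unfolding a_def
    by (intro continuous_intros vc)
  have psiA: "\<psi> \<bullet> Aop r mu x = l * (\<psi> \<bullet> x)" for x
    using Aop_sym[OF sym, of \<psi> r x] eig by simp
  have ad: "(a has_real_derivative (l - S t) * a t) (at t within {0..})" if "t \<ge> 0" for t
  proof -
    have "((\<lambda>t. \<psi> \<bullet> v t) has_vector_derivative \<psi> \<bullet> V t) (at t within {0..})"
      by (rule bounded_linear.has_vector_derivative[OF bounded_linear_inner_right vd[OF that]])
    moreover have "\<psi> \<bullet> V t = (l - S t) * a t" unfolding V_def a_def
      by (simp add: inner_diff_right psiA algebra_simps)
    ultimately show ?thesis unfolding a_def has_real_derivative_iff_has_vector_derivative by simp
  qed
  have a00: "a 0 > 0"
  proof -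
    obtain i where "v 0 $ i \<noteq> 0" using v0(2) by (auto simp: vec_eq_iff)
    hence vi: "v 0 $ i > 0" using v0(1) unfolding nonneg_vec_def by (metis less_eq_real_def)
    have nn: "\<forall>j. \<psi>$j * v 0 $ j \<ge> 0" using pp v0(1) unfolding nonneg_vec_def by (simp add: less_imp_le)
    show ?thesis unfolding a_def inner_vec_def
      by (rule sum_pos2[of UNIV i]) (use vi pp nn in auto)
  qed
  have anz: "a T \<noteq> 0" if T: "T \<ge> 0" for T
  proof -
    obtain B where B: "\<forall>t\<in>{0..T}. norm (S t) \<le> B"
      using cont_bounded[OF continuous_on_subset[OF Sc]] by (metis atLeastAtMost_iff atLeast_iff subsetI)
    define M where "M = \<bar>l\<bar> + B"
    have d: "((\<lambda>t. a t * a t) has_real_derivative (2 * (l - S t) * (a t * a t))) (at t within {0..T})"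
      if "t \<in> {0..T}" for t
    proof -
      have h: "(a has_real_derivative (l - S t) * a t) (at t within {0..T})"
        using ad[of t] that by (auto intro: DERIV_subset)
      show ?thesis by (rule DERIV_cong[OF DERIV_mult'[OF h h]]) (simp add: algebra_simps)
    qed
    have i: "2 * (l - S t) * (a t * a t) \<ge> - (2 * M) * (a t * a t)" if "t \<in> {0..T}" for t
    proof -
      have "\<bar>S t\<bar> \<le> B" using B that by auto
      hence "l - S t \<ge> - M" unfolding M_def by linarith
      moreover have "a t * a t \<ge> 0" by simp
      ultimately have "(l - S t) * (a t * a t) \<ge> (- M) * (a t * a t)" by (rule mult_right_mono)
      thus ?thesis by (simp only: mult.assoc mult_minus_left)
    qed
    have "a T * a T \<ge> a 0 * a 0 * exp (- (2 * M) * T)"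
      by (rule decay_ge[OF T d i])
    moreover have "a 0 * a 0 * exp (- (2 * M) * T) > 0" using a00 by simp
    ultimately show ?thesis by auto
  qed
  have apos: "a T > 0" if T: "T \<ge> 0" for T
  proof (rule ccontr)
    assume "\<not> a T > 0"
    hence "a T \<le> 0" by simp
    then obtain s where "0 \<le> s" "s \<le> T" "a s = 0"
      using IVT2'[of a T 0 0] a00 T continuous_on_subset[OF ac] by force
    thus False using anz by auto
  qed
  define w where "w t = v t - a t *\<^sub>R \<psi>" for t
  have wd: "(w has_vector_derivative (Aop r mu (w t) - S t *\<^sub>R w t)) (at t within {0..})" if "t \<ge> 0" for t
  proof -
    have h1: "((\<lambda>t. a t *\<^sub>R \<psi>) has_vector_derivative (a t *\<^sub>R 0 + ((l - S t) * a t) *\<^sub>R \<psi>)) (at t within {0..})"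
      by (rule has_vector_derivative_scaleR[OF ad[OF that] has_vector_derivative_const])
    have "(w has_vector_derivative (V t - (a t *\<^sub>R 0 + ((l - S t) * a t) *\<^sub>R \<psi>))) (at t within {0..})"
      unfolding w_def by (rule has_vector_derivative_diff[OF vd[OF that] h1])
    moreover have "V t - (a t *\<^sub>R 0 + ((l - S t) * a t) *\<^sub>R \<psi>) = Aop r mu (w t) - S t *\<^sub>R w t"
      unfolding V_def w_def by (simp add: Aop_diff Aop_scale eig scaleR_diff_right scaleR_diff_left algebra_simps)
    ultimately show ?thesis by simp
  qed
  have wpsi: "w t \<bullet> \<psi> = 0" for t
    unfolding w_def a_def inner_diff_left inner_scaleR_left pn inner_commute[of "v t" \<psi>] by simp
  define N where "N t = w t \<bullet> w t" for t
  define X where "X t = w t \<bullet> Aop r mu (w t)" for t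
  have Nd: "(N has_real_derivative 2 * X t - 2 * S t * N t) (at t within {0..})" if "t \<ge> 0" for t
  proof -
    have "((\<lambda>t. w t \<bullet> w t) has_vector_derivative
        (w t \<bullet> (Aop r mu (w t) - S t *\<^sub>R w t) + (Aop r mu (w t) - S t *\<^sub>R w t) \<bullet> w t)) (at t within {0..})"
      by (rule bounded_bilinear.has_vector_derivative[OF bounded_bilinear_inner wd[OF that] wd[OF that]])
    moreover have "w t \<bullet> (Aop r mu (w t) - S t *\<^sub>R w t) + (Aop r mu (w t) - S t *\<^sub>R w t) \<bullet> w t
        = 2 * X t - 2 * S t * N t"
      unfolding X_def N_def by (simp add: inner_diff_left inner_diff_right inner_commute[of "Aop r mu (w t)"])
    ultimately show ?thesis unfolding N_def has_real_derivative_iff_has_vector_derivative by simp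
  qed
  define \<gamma> where "\<gamma> = l - l2"
  have gpos: "\<gamma> > 0" unfolding \<gamma>_def using l2 by simp
  define q where "q t = N t / (a t * a t)" for t
  have qd: "(q has_real_derivative (2 * X t - 2 * l * N t) / (a t * a t)) (at t within {0..})" if "t \<ge> 0" for t
  proof -
    have aa: "((\<lambda>t. a t * a t) has_real_derivative (a t * ((l - S t) * a t) + (l - S t) * a t * a t)) (at t within {0..})"
      by (rule DERIV_mult'[OF ad[OF that] ad[OF that]])
    have "a t \<noteq> 0" using apos[OF that] by simp
    hence nz: "a t * a t \<noteq> 0" by simp
    have "(q has_real_derivative ((2 * X t - 2 * S t * N t) * (a t * a t) - N t * (a t * ((l - S t) * a t) + (l - S t) * a t * a t)) / (a t * a t * (a t * a t))) (at t within {0..})"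
      unfolding q_def by (rule DERIV_divide[OF Nd[OF that] aa nz])
    moreover have "((2 * X t - 2 * S t * N t) * (a t * a t) - N t * (a t * ((l - S t) * a t) + (l - S t) * a t * a t)) / (a t * a t * (a t * a t))
        = (2 * X t - 2 * l * N t) / (a t * a t)"
      using nz by (simp add: field_simps)
    ultimately show ?thesis by simp
  qed
  have qi: "(2 * X t - 2 * l * N t) / (a t * a t) \<le> - (2 * \<gamma>) * q t" if "t \<ge> 0" for t
  proof -
    have "X t \<le> l2 * N t" using gap wpsi unfolding X_def N_def by blast
    hence "2 * X t - 2 * l * N t \<le> - (2 * \<gamma>) * N t" unfolding \<gamma>_def by (simp add: algebra_simps)
    moreover have "a t * a t > 0" using apos[OF that] by simp
    ultimately have "(2 * X t - 2 * l * N t) / (a t * a t) \<le> (- (2 * \<gamma>) * N t) / (a t * a t)"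
      by (intro divide_right_mono) auto
    thus ?thesis unfolding q_def by simp
  qed
  have qdecay: "q T \<le> q 0 * exp (- (2 * \<gamma>) * T)" if T: "T \<ge> 0" for T
    by (rule decay_le[OF T, of q "\<lambda>t. (2 * X t - 2 * l * N t) / (a t * a t)"])
       (use qi in \<open>auto intro!: DERIV_subset[OF qd]\<close>)
  have qnn: "q t \<ge> 0" for t unfolding q_def N_def by simp
  define c where "c = r \<bullet> \<psi>"
  have cpos: "c > 0" unfolding c_def inner_vec_def using rpos pp by (intro sum_pos) (auto intro: mult_pos_pos)
  define eps where "eps t = (r \<bullet> w t) / a t" for t
  define e where "e t = 1 / a t - c / (l * K)" for t
  have ed: "(e has_real_derivative (- l * e t + eps t / K)) (at t within {0..})" if "t \<ge> 0" for t
  proof -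
    have nz: "a t \<noteq> 0" using apos[OF that] by simp
    have "(e has_real_derivative ((0 * a t - 1 * ((l - S t) * a t)) / (a t * a t) - 0)) (at t within {0..})"
      unfolding e_def
      by (intro DERIV_diff DERIV_divide[OF DERIV_const ad[OF that] nz] DERIV_const)
    moreover have "(0 * a t - 1 * ((l - S t) * a t)) / (a t * a t) - 0 = - l * e t + eps t / K"
    proof -
      have rv: "r \<bullet> v t = r \<bullet> w t + a t * c" unfolding w_def c_def by (simp add: inner_diff_right)
      show ?thesis unfolding e_def eps_def S_def rv using nz K lpos
        by (simp add: field_simps)
    qed
    ultimately show ?thesis by simp
  qed
  have eps2: "(eps t)^2 \<le> (r \<bullet> r) * q t" for t
  proof -
    have "(r \<bullet> w t)^2 \<le> (r \<bullet> r) * (w t \<bullet> w t)" by (rule Cauchy_Schwarz_ineq)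
    hence "(r \<bullet> w t)^2 / (a t * a t) \<le> (r \<bullet> r) * (w t \<bullet> w t) / (a t * a t)"
      by (intro divide_right_mono) auto
    thus ?thesis unfolding eps_def q_def N_def by (simp add: power_divide power2_eq_square)
  qed
  define D where "D = (r \<bullet> r) * q 0 / (l * K^2)"
  have Dnn: "D \<ge> 0" unfolding D_def using qnn[of 0] lpos K by simp
  define \<beta> where "\<beta> = min l \<gamma>"
  have bpos: "\<beta> > 0" unfolding \<beta>_def using lpos gpos by simp
  define FF where "FF t = e t * e t + (D / \<gamma>) * exp (- (2 * \<gamma>) * t)" for t
  define FF' where "FF' t = e t * (- l * e t + eps t / K) + (- l * e t + eps t / K) * e t
      + (D / \<gamma>) * (exp (- (2 * \<gamma>) * t) * (- (2 * \<gamma>)))" for t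
  have FFd: "(FF has_real_derivative FF' t) (at t within {0..})" if "t \<ge> 0" for t
    unfolding FF_def FF'_def
    by (intro DERIV_add DERIV_mult' ed[OF that] DERIV_cmult)
       (rule DERIV_cong[OF DERIV_chain2[OF DERIV_exp DERIV_cmult[OF DERIV_ident]]], simp)
  have FFi: "FF' t \<le> - \<beta> * FF t" if "t \<ge> 0" for t
  proof -
    let ?X = "exp (- (2 * \<gamma>) * t)"
    have Xp: "?X > 0" by simp
    have am: "2 * e t * eps t / K \<le> l * (e t)^2 + (eps t)^2 / (l * K^2)" by (rule amgm_aux[OF lpos K])
    have "(eps t)^2 \<le> (r \<bullet> r) * (q 0 * ?X)"
      using eps2[of t] qdecay[OF that] by (smt (verit) mult_left_mono inner_ge_zero)
    hence "(eps t)^2 / (l * K^2) \<le> D * ?X" unfolding D_def using lpos K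
      by (simp add: divide_right_mono)
    hence "FF' t \<le> - l * (e t * e t) - D * ?X"
      using am unfolding FF'_def using gpos by (simp add: power2_eq_square algebra_simps)
    also have "\<dots> \<le> - \<beta> * (e t * e t) - \<beta> * (D / \<gamma>) * ?X"
    proof -
      have "\<beta> * (e t * e t) \<le> l * (e t * e t)" unfolding \<beta>_def by (intro mult_right_mono) auto
      moreover have "\<beta> * (D / \<gamma>) \<le> D"
      proof -
        have "\<beta> / \<gamma> \<le> 1" unfolding \<beta>_def using gpos by simp
        hence "(\<beta> / \<gamma>) * D \<le> 1 * D" using Dnn by (intro mult_right_mono) auto
        thus ?thesis by simp
      qed
      hence "\<beta> * (D / \<gamma>) * ?X \<le> D * ?X" using Xp by (intro mult_right_mono) auto
      ultimately show ?thesis by linarith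
    qed
    also have "\<dots> = - \<beta> * FF t" unfolding FF_def by (simp add: algebra_simps)
    finally show ?thesis .
  qed
  have FFdecay: "FF T \<le> FF 0 * exp (- \<beta> * T)" if T: "T \<ge> 0" for T
    by (rule decay_le[OF T, of FF FF'])
       (use FFi in \<open>auto intro!: DERIV_subset[OF FFd]\<close>)
  have edecay: "e T * e T \<le> FF 0 * exp (- \<beta> * T)" if T: "T \<ge> 0" for T
  proof -
    have "e T * e T \<le> FF T" unfolding FF_def using Dnn gpos by simp
    thus ?thesis using FFdecay[OF T] by simp
  qed
  define F0 where "F0 = FF 0"
  have F0nn: "F0 \<ge> 0" unfolding F0_def FF_def using Dnn gpos by simp
  define h where "h = c / (2 * l * K)"
  have hpos: "h > 0" unfolding h_def using cpos lpos K by simp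
  define L where "L = ln ((F0 + 1) / h^2)"
  define T1 where "T1 = \<bar>L\<bar> / \<beta>"
  have T1nn: "T1 \<ge> 0" unfolding T1_def using bpos by simp
  have late: "a t \<le> 1 / h" if "t \<ge> T1" for t
  proof -
    have t0: "t \<ge> 0" using that T1nn by simp
    have "exp (- \<beta> * t) \<le> exp (- \<beta> * T1)" using that bpos by simp
    also have "\<dots> = exp (- \<bar>L\<bar>)" unfolding T1_def using bpos by simp
    also have "\<dots> \<le> exp (- L)" by simp
    also have "\<dots> = h^2 / (F0 + 1)" unfolding L_def using hpos F0nn
      by (simp add: exp_minus exp_ln)
    finally have "F0 * exp (- \<beta> * t) \<le> F0 * (h^2 / (F0 + 1))" by (rule mult_left_mono[OF _ F0nn])
    also have "\<dots> \<le> h^2" using F0nn hpos by (simp add: field_simps)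
    finally have "e t * e t \<le> h^2" using edecay[OF t0] unfolding F0_def by simp
    hence "(e t)^2 \<le> h^2" by (simp add: power2_eq_square)
    hence "\<bar>e t\<bar> \<le> \<bar>h\<bar>" by (simp add: abs_le_square_iff)
    hence "\<bar>e t\<bar> \<le> h" using hpos by simp
    moreover have "1 / a t = e t + 2 * h" unfolding e_def h_def using lpos K by (simp add: field_simps)
    ultimately have "1 / a t \<ge> h" by (simp add: abs_le_iff)
    thus ?thesis using apos[OF t0] hpos by (simp add: field_simps)
  qed
  obtain B1 where B1: "\<forall>t\<in>{0..T1}. norm (a t) \<le> B1"
    using cont_bounded[OF continuous_on_subset[OF ac]] by (metis atLeastAtMost_iff atLeast_iff subsetI)
  define A where "A = max B1 (1 / h)"
  have Apos: "A > 0" unfolding A_def using hpos by (simp add: less_max_iff_disj)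
  have abound: "a t \<le> A" if "t \<ge> 0" for t
  proof (cases "t \<le> T1")
    case True
    hence "norm (a t) \<le> B1" using B1 that by auto
    hence "a t \<le> B1" by simp
    thus ?thesis unfolding A_def by simp
  next
    case False thus ?thesis using late[of t] unfolding A_def by simp
  qed
  define ab where "ab = l * K / c"
  have abpos: "ab > 0" unfolding ab_def using lpos K cpos by simp
  define C2 where "C2 = min (\<beta> / 2) \<gamma>"
  have C2pos: "C2 > 0" unfolding C2_def using bpos gpos by simp
  define C1 where "C1 = A * ab * sqrt F0 + A * sqrt (q 0) + 1"
  have "A * ab * sqrt F0 \<ge> 0" using Apos abpos F0nn by simp
  moreover have "A * sqrt (q 0) \<ge> 0" using Apos qnn[of 0] by simp
  ultimately have C1pos: "C1 > 0" unfolding C1_def by linarith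
  have main: "linf_norm (v t - ab *\<^sub>R \<psi>) \<le> C1 * exp (- C2 * t)" if t0: "t \<ge> 0" for t
  proof -
    have at: "a t > 0" by (rule apos[OF t0])
    have split: "v t - ab *\<^sub>R \<psi> = (a t - ab) *\<^sub>R \<psi> + w t" unfolding w_def by (simp add: algebra_simps)
    have npsi: "norm \<psi> = 1" using pn by (simp add: norm_eq_sqrt_inner)
    have ediff: "a t - ab = - (a t * ab * e t)" unfolding e_def ab_def using at lpos K cpos
      by (simp add: field_simps)
    have e1: "\<bar>e t\<bar> \<le> sqrt F0 * exp (- (\<beta> / 2) * t)"
      by (rule sqrt_exp_bound) (use edecay[OF t0] F0nn in \<open>auto simp: F0_def power2_eq_square\<close>)
    have "C2 * t \<le> (\<beta> / 2) * t" unfolding C2_def using t0 by (intro mult_right_mono) auto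
    hence x1: "exp (- (\<beta> / 2) * t) \<le> exp (- C2 * t)" by simp
    have "C2 * t \<le> \<gamma> * t" unfolding C2_def using t0 by (intro mult_right_mono) auto
    hence x2: "exp (- \<gamma> * t) \<le> exp (- C2 * t)" by simp
    have "norm ((a t - ab) *\<^sub>R \<psi>) = a t * ab * \<bar>e t\<bar>" using npsi at abpos ediff by (simp add: abs_mult)
    also have "\<dots> \<le> A * ab * (sqrt F0 * exp (- C2 * t))"
    proof (intro mult_mono)
      show "\<bar>e t\<bar> \<le> sqrt F0 * exp (- C2 * t)" using e1 mult_left_mono[OF x1 real_sqrt_ge_zero[OF F0nn]] by linarith
    qed (use abound[OF t0] abpos Apos in auto)
    finally have n1: "norm ((a t - ab) *\<^sub>R \<psi>) \<le> A * ab * sqrt F0 * exp (- C2 * t)" by simp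
    have sq: "sqrt (q t) \<le> sqrt (q 0) * exp (- \<gamma> * t)"
    proof -
      have "\<bar>sqrt (q t)\<bar> \<le> sqrt (q 0) * exp (- ((2 * \<gamma>) / 2) * t)"
        by (rule sqrt_exp_bound) (use qdecay[OF t0] qnn in auto)
      thus ?thesis by simp
    qed
    have "norm (w t) = a t * sqrt (q t)"
    proof -
      have "q t * (a t * a t) = N t" unfolding q_def using at by simp
      hence "sqrt (N t) = sqrt (q t) * sqrt (a t * a t)" by (metis real_sqrt_mult)
      hence "sqrt (N t) = sqrt (q t) * a t" using at by (simp add: real_sqrt_mult_self)
      thus ?thesis unfolding N_def by (simp add: norm_eq_sqrt_inner)
    qed
    also have "\<dots> \<le> A * (sqrt (q 0) * exp (- C2 * t))"
    proof (intro mult_mono)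
      show "sqrt (q t) \<le> sqrt (q 0) * exp (- C2 * t)"
        using sq mult_left_mono[OF x2 real_sqrt_ge_zero[OF qnn[of 0]]] by linarith
    qed (use abound[OF t0] Apos qnn[of t] in auto)
    finally have n2: "norm (w t) \<le> A * sqrt (q 0) * exp (- C2 * t)" by simp
    have "linf_norm (v t - ab *\<^sub>R \<psi>) \<le> norm (v t - ab *\<^sub>R \<psi>)" by (rule linf_le_norm)
    also have "\<dots> \<le> norm ((a t - ab) *\<^sub>R \<psi>) + norm (w t)" unfolding split by (rule norm_triangle_ineq)
    also have "\<dots> \<le> (A * ab * sqrt F0 + A * sqrt (q 0)) * exp (- C2 * t)"
      using n1 n2 by (simp add: algebra_simps)
    also have "\<dots> \<le> C1 * exp (- C2 * t)" unfolding C1_def by (simp add: algebra_simps)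
    finally show ?thesis .
  qed
  show ?thesis unfolding ab_def[symmetric] c_def[symmetric] using C1pos C2pos main by blast
qed



theorem theorem1p2:
  fixes K :: real and r :: "real^'n" and mu :: "real^'n^'n"
  assumes "K > 0" and "positive_vec r"
    and "nonneg_matrix mu" and "symmetric_matrix mu" and "irreducible_matrix mu"
  shows "(\<exists>!vb. positive_vec vb \<and> stationary K r mu vb) \<and>
         (\<forall>vb v. positive_vec vb \<and> stationary K r mu vb \<and>
            (\<forall>t\<ge>0. (v has_vector_derivative rhs K r mu (v t)) (at t within {0..})) \<and>
            nonneg_vec (v 0) \<and> v 0 \<noteq> 0 \<longrightarrow>
            (\<exists>C1 C2. C1 > 0 \<and> C2 > 0 \<and>
               (\<forall>t\<ge>0. linf_norm (v t - vb) \<le> C1 * exp (- C2 * t))))"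
proof -
  note K = assms(1)
  obtain \<psi> l l2 where pp: "\<forall>i. \<psi>$i > 0" and pn: "\<psi> \<bullet> \<psi> = 1" and eig: "Aop r mu \<psi> = l *\<^sub>R \<psi>"
    and lpos: "l > 0" and l2: "l2 < l" and gap: "\<forall>x. x \<bullet> \<psi> = 0 \<longrightarrow> x \<bullet> Aop r mu x \<le> l2 * (x \<bullet> x)"
    using spectral[OF assms(3,4,5,2)] by blast
  have rpos: "\<forall>i. r$i > 0" using assms(2) unfolding positive_vec_def by auto
  define c where "c = r \<bullet> \<psi>"
  have cpos: "c > 0" unfolding c_def inner_vec_def using rpos pp by (intro sum_pos) (auto intro: mult_pos_pos)
  define ab where "ab = l * K / c"
  have abpos: "ab > 0" unfolding ab_def using lpos K cpos by simp
  have psiA: "\<psi> \<bullet> Aop r mu x = l * (\<psi> \<bullet> x)" for x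
    using Aop_sym[OF assms(4), of \<psi> r x] eig by simp
  have ex: "positive_vec (ab *\<^sub>R \<psi>) \<and> stationary K r mu (ab *\<^sub>R \<psi>)"
  proof
    show "positive_vec (ab *\<^sub>R \<psi>)" unfolding positive_vec_def using pp abpos by simp
    have "(r \<bullet> (ab *\<^sub>R \<psi>)) / K = l" unfolding ab_def using K cpos by (simp add: c_def[symmetric])
    thus "stationary K r mu (ab *\<^sub>R \<psi>)" unfolding stationary_def rhs_eq
      by (simp add: Aop_scale eig)
  qed
  have uniq: "y = ab *\<^sub>R \<psi>" if "positive_vec y" "stationary K r mu y" for y
  proof -
    define s where "s = (r \<bullet> y) / K"
    have Ay: "Aop r mu y = s *\<^sub>R y" using that(2) unfolding stationary_def rhs_eq s_def by simp
    have py: "\<psi> \<bullet> y > 0" unfolding inner_vec_def using pp that(1) unfolding positive_vec_def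
      by (intro sum_pos) (auto intro: mult_pos_pos)
    have "l * (\<psi> \<bullet> y) = s * (\<psi> \<bullet> y)" using psiA[of y] Ay by (auto simp: mult.commute)
    hence sl: "s = l" using py by simp
    define m where "m = \<psi> \<bullet> y"
    define z where "z = y - m *\<^sub>R \<psi>"
    have zp: "z \<bullet> \<psi> = 0" unfolding z_def m_def inner_diff_left inner_scaleR_left pn inner_commute[of y \<psi>] by simp
    have Az: "Aop r mu z = l *\<^sub>R z" unfolding z_def using Ay sl
      by (simp add: Aop_diff Aop_scale eig scaleR_diff_right)
    have "l * (z \<bullet> z) \<le> l2 * (z \<bullet> z)" using gap zp Az by auto
    hence "(l - l2) * (z \<bullet> z) \<le> 0" by (simp add: algebra_simps)
    hence "z \<bullet> z \<le> 0" using l2 by (simp add: mult_le_0_iff)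
    hence "z = 0" using inner_ge_zero[of z] inner_eq_zero_iff[of z] by linarith
    hence ym: "y = m *\<^sub>R \<psi>" unfolding z_def by simp
    have "s = m * c / K" unfolding s_def c_def ym by simp
    hence "m = ab" using sl K cpos unfolding ab_def by (simp add: field_simps)
    thus ?thesis using ym by simp
  qed
  have P1: "\<exists>!vb. positive_vec vb \<and> stationary K r mu vb"
    using ex uniq by blast
  have P2: "\<exists>C1 C2. C1 > 0 \<and> C2 > 0 \<and> (\<forall>t\<ge>0. linf_norm (v t - vb) \<le> C1 * exp (- C2 * t))"
    if "positive_vec vb \<and> stationary K r mu vb \<and>
            (\<forall>t\<ge>0. (v has_vector_derivative rhs K r mu (v t)) (at t within {0..})) \<and>
            nonneg_vec (v 0) \<and> v 0 \<noteq> 0" for vb v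
  proof -
    have "vb = ab *\<^sub>R \<psi>" using uniq that by blast
    moreover have "\<exists>C1 C2. C1 > 0 \<and> C2 > 0 \<and>
       (\<forall>t\<ge>0. linf_norm (v t - (l * K / (r \<bullet> \<psi>)) *\<^sub>R \<psi>) \<le> C1 * exp (- C2 * t))"
      by (rule ode_conv[OF K rpos assms(4) pp pn eig lpos l2 gap]) (use that in auto)
    ultimately show ?thesis unfolding ab_def c_def by simp
  qed
  show ?thesis using P1 P2 by blast
qed

end
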